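(* There is an absolute constant $c>0$ such that the following holds. Let $n,d,k\ge1$, let $\phi:\mathbb{R}\to\mathbb{R}$ be $L$-Lipschitz with $\phi(0)=0$, let $b>0$, and let $x_1,\dots,x_n,x'_1,\dots,x'_n\in\mathbb{R}^d$ satisfy $\|x_i\|_2,\|x'_i\|_2\le b$. For $a,a'>0$ let $\mathcal{J}^k_{a,a'}=\{A\in\mathbb{R}^{d\times k}:\|A\|_{2,1}\le a,\ \|A\|_{op}\le a'\}$. Then for every $\varepsilon>0$, $$\log\mathcal{N}\big(\mathcal{F}_k(\mathcal{J}^k_{a,a'}),\varepsilon\big)\le c\,\frac{a^2a'^2b^4nL^4}{k^2\varepsilon^2}\log(2dk).$$
   Context: For $A\in\mathbb{R}^{d\times k}$ with columns $A_{\cdot 1},\dots,A_{\cdot k}$: $\|A\|_{2,1}=\sum_{j=1}^k\|A_{\cdot j}\|_2$ and $\|A\|_{op}$ is the spectral norm. For $u,v\in\mathbb{R}^k$, $\zeta_k(u,v)=\frac1k\|u-v\|_2^2$. The function $\phi$ is applied coordinatewise to vectors. Given fixed points $x_1,\dots,x_n,x'_1,\dots,x'_n\in\mathbb{R}^d$ and a set $\mathcal{G}\subset\mathbb{R}^{d\times k}$, define $\mathcal{F}_k(\mathcal{G})=\{(\zeta_k(\phi(A^tx_i),\phi(A^tx'_i)))_{i=1}^n : A\in\mathcal{G}\}\subset\mathbb{R}^n$. For $\mathcal{A}\subset\mathbb{R}^n$, the covering number $\mathcal{N}(\mathcal{A},\varepsilon)$ is the minimal size of a set $\mathcal{B}\subset\mathcal{A}$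 such that every $x\in\mathcal{A}$ has some $y\in\mathcal{B}$ with $\|x-y\|_2\le\varepsilon$. *)

theory Defs
  imports "HOL-Analysis.Analysis"
begin

text \<open>Conventions. Vectors in R^m are functions nat => real, only the
coordinates 0..<m matter. A d x k matrix is a function nat => nat => real,
entry A i j with i < d (row), j < k (column).\<close>

definition vnorm :: "nat \<Rightarrow> (nat \<Rightarrow> real) \<Rightarrow> real" where
  "vnorm m v = sqrt (\<Sum>i<m. (v i)\<^sup>2)"

definition norm21 :: "nat \<Rightarrow> nat \<Rightarrow> (nat \<Rightarrow> nat \<Rightarrow> real) \<Rightarrow> real" where
  "norm21 d k A = (\<Sum>j<k. vnorm d (\<lambda>i. A i j))"

definition matvec :: "nat \<Rightarrow> (nat \<Rightarrow> nat \<Rightarrow> real) \<Rightarrow> (nat \<Rightarrow> real) \<Rightarrow> (nat \<Rightarrow> real)" where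
  "matvec k A v = (\<lambda>i. \<Sum>j<k. A i j * v j)"

definition tmatvec :: "nat \<Rightarrow> (nat \<Rightarrow> nat \<Rightarrow> real) \<Rightarrow> (nat \<Rightarrow> real) \<Rightarrow> (nat \<Rightarrow> real)" where
  "tmatvec d A x = (\<lambda>j. \<Sum>i<d. A i j * x i)"

definition opnorm :: "nat \<Rightarrow> nat \<Rightarrow> (nat \<Rightarrow> nat \<Rightarrow> real) \<Rightarrow> real" where
  "opnorm d k A = Sup {vnorm d (matvec k A v) | v. vnorm k v \<le> 1}"

definition zeta :: "nat \<Rightarrow> (nat \<Rightarrow> real) \<Rightarrow> (nat \<Rightarrow> real) \<Rightarrow> real" where
  "zeta k u v = (1 / real k) * (vnorm k (\<lambda>j. u j - v j))\<^sup>2"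

definition J_set :: "nat \<Rightarrow> nat \<Rightarrow> real \<Rightarrow> real \<Rightarrow> (nat \<Rightarrow> nat \<Rightarrow> real) set" where
  "J_set d k a a' = {A. norm21 d k A \<le> a \<and> opnorm d k A \<le> a'}"

text \<open>F_k(G) as a subset of R^n; vectors are canonicalised to be 0 outside 0..<n.\<close>
definition F_set :: "nat \<Rightarrow> nat \<Rightarrow> nat \<Rightarrow> (real \<Rightarrow> real) \<Rightarrow> (nat \<Rightarrow> nat \<Rightarrow> real)
     \<Rightarrow> (nat \<Rightarrow> nat \<Rightarrow> real) \<Rightarrow> (nat \<Rightarrow> nat \<Rightarrow> real) set \<Rightarrow> (nat \<Rightarrow> real) set" where
  "F_set n d k \<phi> x x' G =
     (\<lambda>A. (\<lambda>i. if i < n then zeta k (\<phi> \<circ> tmatvec d A (x i)) (\<phi> \<circ> tmatvec d A (x' i)) else 0)) ` G"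

definition covering_number :: "nat \<Rightarrow> (nat \<Rightarrow> real) set \<Rightarrow> real \<Rightarrow> nat" where
  "covering_number n S \<epsilon> =
     Inf {card B | B. finite B \<and> B \<subseteq> S \<and> (\<forall>u\<in>S. \<exists>w\<in>B. vnorm n (\<lambda>i. u i - w i) \<le> \<epsilon>)}"

end

theory Submission
  imports Defs
begin


lemma vnorm_L2: "vnorm m v = L2_set v {..<m}"
  by (simp add: vnorm_def L2_set_def)

lemma vnorm_nonneg[simp]: "0 \<le> vnorm m v"
  by (simp add: vnorm_L2)

lemma vnorm_sq: "(vnorm m v)\<^sup>2 = (\<Sum>i<m. (v i)\<^sup>2)"
  unfolding vnorm_def by (simp add: sum_nonneg)

lemma vnorm_triangle: "vnorm m (\<lambda>i. u i + v i) \<le> vnorm m u + vnorm m v"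
  unfolding vnorm_L2 by (rule L2_set_triangle_ineq)

lemma vnorm_diff_triangle:
  "vnorm m (\<lambda>i. u i - w i) \<le> vnorm m (\<lambda>i. u i - v i) + vnorm m (\<lambda>i. v i - w i)"
  using vnorm_triangle[of m "\<lambda>i. u i - v i" "\<lambda>i. v i - w i"] by simp

lemma vnorm_neg: "vnorm m (\<lambda>i. - u i) = vnorm m u"
  by (simp add: vnorm_def)

lemma vnorm_minus: "vnorm m (\<lambda>i. u i - v i) \<le> vnorm m u + vnorm m v"
  using vnorm_triangle[of m u "\<lambda>i. - v i"] vnorm_neg[of m v] by simp

lemma vnorm_commute: "vnorm m (\<lambda>i. u i - v i) = vnorm m (\<lambda>i. v i - u i)"
  unfolding vnorm_def by (simp add: power2_commute)

lemma vnorm_rev: "\<bar>vnorm m u - vnorm m v\<bar> \<le> vnorm m (\<lambda>i. u i - v i)"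
proof -
  have "vnorm m u \<le> vnorm m (\<lambda>i. u i - v i) + vnorm m v"
    using vnorm_triangle[of m "\<lambda>i. u i - v i" v] by simp
  moreover have "vnorm m v \<le> vnorm m (\<lambda>i. u i - v i) + vnorm m u"
    using vnorm_triangle[of m "\<lambda>i. v i - u i" u] vnorm_commute[of m u v] by simp
  ultimately show ?thesis by linarith
qed

lemma vnorm_scale: "vnorm m (\<lambda>i. c * v i) = \<bar>c\<bar> * vnorm m v"
  unfolding vnorm_def by (simp add: power_mult_distrib real_sqrt_mult sum_nonneg flip: sum_distrib_left)

lemma vnorm_mono_sq: "(\<Sum>i<m. (u i)\<^sup>2) \<le> (\<Sum>i<m. (v i)\<^sup>2) \<Longrightarrow> vnorm m u \<le> vnorm m v"
  unfolding vnorm_def by simp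

lemma CS_abs: "\<bar>\<Sum>i\<in>A. u i * v i\<bar> \<le> L2_set u A * L2_set v A"
proof -
  have "\<bar>\<Sum>i\<in>A. u i * v i\<bar> \<le> (\<Sum>i\<in>A. \<bar>u i\<bar> * \<bar>v i\<bar>)"
    by (metis (no_types, lifting) abs_mult sum.cong sum_abs)
  also have "\<dots> \<le> L2_set u A * L2_set v A" by (rule L2_set_mult_ineq)
  finally show ?thesis .
qed

lemma CS_vnorm: "\<bar>\<Sum>i<m. u i * v i\<bar> \<le> vnorm m u * vnorm m v"
  unfolding vnorm_L2 by (rule CS_abs)

lemma CS2: "finite A \<Longrightarrow> (\<Sum>i\<in>A. u i * (v i::real))\<^sup>2 \<le> (\<Sum>i\<in>A. (u i)\<^sup>2) * (\<Sum>i\<in>A. (v i)\<^sup>2)"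
proof -
  assume "finite A"
  have "(\<Sum>i\<in>A. u i * v i)\<^sup>2 = \<bar>\<Sum>i\<in>A. u i * v i\<bar>\<^sup>2" by simp
  also have "\<dots> \<le> (L2_set u A * L2_set v A)\<^sup>2"
    by (rule power_mono[OF CS_abs]) simp
  also have "\<dots> = (\<Sum>i\<in>A. (u i)\<^sup>2) * (\<Sum>i\<in>A. (v i)\<^sup>2)"
    unfolding L2_set_def power_mult_distrib by (simp add: sum_nonneg)
  finally show ?thesis .
qed

lemma lip_abs:
  assumes "L-lipschitz_on UNIV \<phi>"
  shows "\<bar>\<phi> s - \<phi> t\<bar> \<le> L * \<bar>s - t\<bar>"
  using assms unfolding lipschitz_on_def dist_real_def by auto

lemma lip_vec:
  assumes "L-lipschitz_on UNIV \<phi>"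
  shows "vnorm k (\<lambda>j. \<phi> (u j) - \<phi> (v j)) \<le> L * vnorm k (\<lambda>j. u j - v j)"
proof -
  have L: "0 \<le> L" using assms unfolding lipschitz_on_def by auto
  have "vnorm k (\<lambda>j. \<phi> (u j) - \<phi> (v j)) = L2_set (\<lambda>j. \<bar>\<phi> (u j) - \<phi> (v j)\<bar>) {..<k}"
    unfolding vnorm_L2 L2_set_def by simp
  also have "\<dots> \<le> L2_set (\<lambda>j. L * \<bar>u j - v j\<bar>) {..<k}"
    by (rule L2_set_mono) (auto intro: lip_abs[OF assms])
  also have "\<dots> = L * vnorm k (\<lambda>j. u j - v j)"
    using L unfolding vnorm_def L2_set_def
    by (simp add: power_mult_distrib real_sqrt_mult sum_nonneg flip: sum_distrib_left)
  finally show ?thesis .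
qed

lemma matvec_bound:
  assumes "vnorm k v \<le> 1"
  shows "vnorm d (matvec k A v) \<le> sqrt (\<Sum>i<d. \<Sum>j<k. (A i j)\<^sup>2)"
proof -
  have "(\<Sum>i<d. (matvec k A v i)\<^sup>2) \<le> (\<Sum>i<d. (\<Sum>j<k. (A i j)\<^sup>2) * (\<Sum>j<k. (v j)\<^sup>2))"
    unfolding matvec_def by (rule sum_mono) (rule CS2, simp)
  also have "\<dots> \<le> (\<Sum>i<d. (\<Sum>j<k. (A i j)\<^sup>2))"
  proof (rule sum_mono)
    fix i
    have "(\<Sum>j<k. (v j)\<^sup>2) \<le> 1"
      using assms unfolding vnorm_def by (metis real_sqrt_le_1_iff)
    then show "(\<Sum>j<k. (A i j)\<^sup>2) * (\<Sum>j<k. (v j)\<^sup>2) \<le> (\<Sum>j<k. (A i j)\<^sup>2)"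
      by (simp add: mult_left_le sum_nonneg)
  qed
  finally show ?thesis unfolding vnorm_def by simp
qed

lemma opnorm_ge:
  assumes "vnorm k v \<le> 1"
  shows "vnorm d (matvec k A v) \<le> opnorm d k A"
  unfolding opnorm_def
proof (rule cSup_upper)
  show "vnorm d (matvec k A v) \<in> {vnorm d (matvec k A v) |v. vnorm k v \<le> 1}" using assms by blast
  show "bdd_above {vnorm d (matvec k A v) |v. vnorm k v \<le> 1}"
    unfolding bdd_above_def using matvec_bound by blast
qed

lemma opnorm_nonneg: "0 \<le> opnorm d k A"
  using opnorm_ge[of k "\<lambda>_. 0" d A] by (simp add: vnorm_def matvec_def)

lemma tmat_bound:
  assumes "opnorm d k A \<le> a'"
  shows "vnorm k (tmatvec d A y) \<le> a' * vnorm d y"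
proof -
  define z where "z = tmatvec d A y"
  define N where "N = vnorm k z"
  have a': "0 \<le> a'" using opnorm_nonneg[of d k A] assms by linarith
  show ?thesis
  proof (cases "N = 0")
    case True then show ?thesis using a' unfolding z_def N_def by simp
  next
    case False
    then have Npos: "N > 0" using vnorm_nonneg[of k z] unfolding N_def by linarith
    have "N\<^sup>2 = (\<Sum>j<k. z j * z j)" unfolding N_def vnorm_sq by (simp add: power2_eq_square)
    also have "\<dots> = (\<Sum>j<k. (\<Sum>i<d. A i j * y i) * z j)" unfolding z_def tmatvec_def by simp
    also have "\<dots> = (\<Sum>i<d. y i * matvec k A z i)"
      unfolding matvec_def by (simp add: sum_distrib_left sum_distrib_right mult_ac sum.swap[of _ "{..<k}"])
    also have "\<dots> \<le> vnorm d y * vnorm d (matvec k A z)"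
      using CS_vnorm[where m=d and u=y and v="matvec k A z"] by linarith
    also have "matvec k A z = (\<lambda>i. N * matvec k A (\<lambda>j. z j / N) i)"
      using Npos unfolding matvec_def by (auto simp: sum_distrib_left)
    also have "vnorm d \<dots> = N * vnorm d (matvec k A (\<lambda>j. z j / N))"
      using vnorm_scale Npos by simp
    also have "vnorm d (matvec k A (\<lambda>j. z j / N)) \<le> a'"
    proof -
      have "vnorm k (\<lambda>j. z j / N) = 1"
        using vnorm_scale[of k "1/N" z] Npos unfolding N_def by (simp add: field_simps)
      then show ?thesis using opnorm_ge[of k "\<lambda>j. z j / N" d A] assms by simp
    qed
    then have "vnorm d y * (N * vnorm d (matvec k A (\<lambda>j. z j / N))) \<le> vnorm d y * (N * a')"
      using Npos by (simp add: mult_left_mono)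
    finally have "N\<^sup>2 \<le> vnorm d y * (N * a')" by simp
    then have "N * N \<le> N * (a' * vnorm d y)" by (simp add: power2_eq_square mult_ac)
    then have "N \<le> a' * vnorm d y" using Npos by simp
    then show ?thesis unfolding N_def z_def .
  qed
qed



definition clip :: "real \<Rightarrow> real \<Rightarrow> real" where
  "clip M z = max 0 (min M z)"

lemma clip_real:
  fixes p q e W kk :: real
  assumes "0 \<le> p" "p \<le> W" "0 \<le> q" "\<bar>p - q\<bar> \<le> e" "kk > 0"
  shows "\<bar>p\<^sup>2 / kk - clip (W\<^sup>2 / kk) (q\<^sup>2 / kk)\<bar> \<le> 3 * W * e / kk"
proof -
  have c: "clip (W\<^sup>2 / kk) (q\<^sup>2 / kk) = min (W\<^sup>2) (q\<^sup>2) / kk"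
  proof (cases "W\<^sup>2 \<le> q\<^sup>2")
    case True
    then have "W\<^sup>2 / kk \<le> q\<^sup>2 / kk" using assms(5) by (simp add: divide_right_mono)
    then show ?thesis using True assms(5) unfolding clip_def by (simp add: min_def)
  next
    case False
    then have "q\<^sup>2 / kk \<le> W\<^sup>2 / kk" using assms(5) by (simp add: divide_right_mono)
    then show ?thesis using False assms(5) unfolding clip_def by (simp add: min_def)
  qed
  have e0: "0 \<le> e" using assms(4) by linarith
  have P: "p\<^sup>2 \<le> W\<^sup>2" using assms(1,2) by (simp add: power_mono)
  have W0: "0 \<le> W" using assms(1,2) by linarith
  have "\<bar>p\<^sup>2 - min (W\<^sup>2) (q\<^sup>2)\<bar> \<le> 3 * W * e"
  proof (cases "e \<le> W")
    case True
    have "\<bar>p\<^sup>2 - min (W\<^sup>2) (q\<^sup>2)\<bar> \<le> \<bar>p\<^sup>2 - q\<^sup>2\<bar>" using P by (auto simp: min_def)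
    also have "p\<^sup>2 - q\<^sup>2 = (p - q) * (p + q)" by (simp add: power2_eq_square algebra_simps)
    also have "\<bar>(p - q) * (p + q)\<bar> = \<bar>p - q\<bar> * (p + q)" using assms(1,3) by (simp add: abs_mult)
    also have "\<dots> \<le> e * (2 * W + e)"
      by (rule mult_mono) (use assms in auto)
    also have "\<dots> = 2 * W * e + e * e" by (simp add: algebra_simps)
    also have "e * e \<le> W * e" using True e0 by (rule mult_right_mono)
    finally show ?thesis by simp
  next
    case False
    have "\<bar>p\<^sup>2 - min (W\<^sup>2) (q\<^sup>2)\<bar> \<le> W\<^sup>2"
    proof -
      have "0 \<le> min (W\<^sup>2) (q\<^sup>2)" "min (W\<^sup>2) (q\<^sup>2) \<le> W\<^sup>2" by auto
      then show ?thesis using P zero_le_power2[of p] unfolding abs_le_iff by linarith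
    qed
    also have "\<dots> = W * W" by (simp add: power2_eq_square)
    also have "\<dots> \<le> W * e" using False W0 by (intro mult_left_mono) auto
    also have "\<dots> \<le> 3 * W * e" using W0 e0 by simp
    finally show ?thesis .
  qed
  then have "\<bar>p\<^sup>2 - min (W\<^sup>2) (q\<^sup>2)\<bar> / kk \<le> 3 * W * e / kk"
    using assms(5) by (simp add: divide_right_mono)
  moreover have "\<bar>p\<^sup>2 / kk - min (W\<^sup>2) (q\<^sup>2) / kk\<bar> = \<bar>p\<^sup>2 - min (W\<^sup>2) (q\<^sup>2)\<bar> / kk"
    using assms(5) by (simp add: diff_divide_distrib[symmetric] abs_divide)
  ultimately show ?thesis unfolding c by simp
qed



lemma zeta_eq: "zeta k (\<phi> \<circ> u) (\<phi> \<circ> v) = (vnorm k (\<lambda>j. \<phi> (u j) - \<phi> (v j)))\<^sup>2 / real k"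
  unfolding zeta_def by simp

lemma tmatvec_diff: "tmatvec d A x j - tmatvec d A y j = tmatvec d A (\<lambda>i. x i - y i) j"
  unfolding tmatvec_def by (simp add: sum_subtractf right_diff_distrib)

lemma key_coord:
  assumes lip: "L-lipschitz_on UNIV \<phi>" and op: "opnorm d k A \<le> a'"
    and xb: "vnorm d xi \<le> b" "vnorm d xi' \<le> b" and k: "k \<ge> 1"
  shows "\<bar>zeta k (\<phi> \<circ> tmatvec d A xi) (\<phi> \<circ> tmatvec d A xi')
          - clip ((2*L*b*a')\<^sup>2 / real k) (zeta k (\<phi> \<circ> tmatvec d B xi) (\<phi> \<circ> tmatvec d B xi'))\<bar>
     \<le> 3 * (2*L*b*a') * (L * (vnorm k (\<lambda>j. tmatvec d A xi j - tmatvec d B xi j)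
                             + vnorm k (\<lambda>j. tmatvec d A xi' j - tmatvec d B xi' j))) / real k"
proof -
  have L: "0 \<le> L" using lip unfolding lipschitz_on_def by auto
  define uA where "uA = tmatvec d A xi"
  define vA where "vA = tmatvec d A xi'"
  define uB where "uB = tmatvec d B xi"
  define vB where "vB = tmatvec d B xi'"
  define p where "p = vnorm k (\<lambda>j. \<phi> (uA j) - \<phi> (vA j))"
  define q where "q = vnorm k (\<lambda>j. \<phi> (uB j) - \<phi> (vB j))"
  have "vnorm k (\<lambda>j. uA j - vA j) = vnorm k (tmatvec d A (\<lambda>i. xi i - xi' i))"
    unfolding uA_def vA_def tmatvec_diff ..
  also have "\<dots> \<le> a' * vnorm d (\<lambda>i. xi i - xi' i)" by (rule tmat_bound[OF op])
  also have "\<dots> \<le> a' * (2 * b)"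
  proof -
    have "0 \<le> a'" using opnorm_nonneg[of d k A] op by linarith
    moreover have "vnorm d (\<lambda>i. xi i - xi' i) \<le> 2 * b" using vnorm_minus[of d xi xi'] xb by linarith
    ultimately show ?thesis by (rule mult_left_mono[rotated])
  qed
  finally have vb: "vnorm k (\<lambda>j. uA j - vA j) \<le> a' * (2 * b)" .
  have "p \<le> L * vnorm k (\<lambda>j. uA j - vA j)" unfolding p_def by (rule lip_vec[OF lip])
  also have "\<dots> \<le> L * (a' * (2 * b))" using vb L by (rule mult_left_mono)
  finally have pW: "p \<le> 2*L*b*a'" by (simp add: mult_ac)
  have "\<bar>p - q\<bar> \<le> vnorm k (\<lambda>j. (\<phi> (uA j) - \<phi> (vA j)) - (\<phi> (uB j) - \<phi> (vB j)))"
    unfolding p_def q_def by (rule vnorm_rev)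
  also have "\<dots> = vnorm k (\<lambda>j. (\<phi> (uA j) - \<phi> (uB j)) - (\<phi> (vA j) - \<phi> (vB j)))"
    by (rule arg_cong[where f="vnorm k"]) (auto simp: algebra_simps)
  also have "\<dots> \<le> vnorm k (\<lambda>j. \<phi> (uA j) - \<phi> (uB j)) + vnorm k (\<lambda>j. \<phi> (vA j) - \<phi> (vB j))"
    by (rule vnorm_minus)
  also have "\<dots> \<le> L * vnorm k (\<lambda>j. uA j - uB j) + L * vnorm k (\<lambda>j. vA j - vB j)"
    by (intro add_mono lip_vec[OF lip])
  finally have pq: "\<bar>p - q\<bar> \<le> L * (vnorm k (\<lambda>j. uA j - uB j) + vnorm k (\<lambda>j. vA j - vB j))"
    by (simp add: algebra_simps)
  have "\<bar>p\<^sup>2 / real k - clip ((2*L*b*a')\<^sup>2 / real k) (q\<^sup>2 / real k)\<bar>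
        \<le> 3 * (2*L*b*a') * (L * (vnorm k (\<lambda>j. uA j - uB j) + vnorm k (\<lambda>j. vA j - vB j))) / real k"
    by (rule clip_real) (use pW pq k in \<open>auto simp: p_def q_def\<close>)
  then show ?thesis unfolding zeta_eq p_def q_def uA_def uB_def vA_def vB_def .
qed



definition fvec where
  "fvec n d k \<phi> x x' A = (\<lambda>i. if i < n then zeta k (\<phi> \<circ> tmatvec d A (x i)) (\<phi> \<circ> tmatvec d A (x' i)) else 0)"

definition cvec where
  "cvec n d k \<phi> x x' M B = (\<lambda>i. if i < n then clip M (zeta k (\<phi> \<circ> tmatvec d B (x i)) (\<phi> \<circ> tmatvec d B (x' i))) else 0)"

definition dist2 where
  "dist2 n d k x x' A B = (\<Sum>i<n. (\<Sum>j<k. (tmatvec d A (x i) j - tmatvec d B (x i) j)\<^sup>2)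
                              + (\<Sum>j<k. (tmatvec d A (x' i) j - tmatvec d B (x' i) j)\<^sup>2))"

lemma sq_sum_le: "((u::real) + v)\<^sup>2 \<le> 2 * (u\<^sup>2 + v\<^sup>2)"
proof -
  have "0 \<le> (u - v)\<^sup>2" by simp
  then show ?thesis by (simp add: power2_eq_square algebra_simps)
qed

lemma cover_dist:
  assumes lip: "L-lipschitz_on UNIV \<phi>" and op: "opnorm d k A \<le> a'"
    and xb: "\<forall>i<n. vnorm d (x i) \<le> b \<and> vnorm d (x' i) \<le> b" and k: "k \<ge> 1"
  shows "(vnorm n (\<lambda>i. fvec n d k \<phi> x x' A i - cvec n d k \<phi> x x' ((2*L*b*a')\<^sup>2 / real k) B i))\<^sup>2
         \<le> 18 * (2*L*b*a')\<^sup>2 * L\<^sup>2 * dist2 n d k x x' A B / (real k)\<^sup>2"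
proof -
  define W where "W = 2*L*b*a'"
  define al where "al i = vnorm k (\<lambda>j. tmatvec d A (x i) j - tmatvec d B (x i) j)" for i
  define be where "be i = vnorm k (\<lambda>j. tmatvec d A (x' i) j - tmatvec d B (x' i) j)" for i
  have "(vnorm n (\<lambda>i. fvec n d k \<phi> x x' A i - cvec n d k \<phi> x x' (W\<^sup>2 / real k) B i))\<^sup>2
      = (\<Sum>i<n. (fvec n d k \<phi> x x' A i - cvec n d k \<phi> x x' (W\<^sup>2 / real k) B i)\<^sup>2)"
    by (rule vnorm_sq)
  also have "\<dots> \<le> (\<Sum>i<n. (3 * W * (L * (al i + be i)) / real k)\<^sup>2)"
  proof (rule sum_mono)
    fix i assume "i \<in> {..<n}"
    then have i: "i < n" by simp
    have "\<bar>fvec n d k \<phi> x x' A i - cvec n d k \<phi> x x' (W\<^sup>2 / real k) B i\<bar> \<le> 3 * W * (L * (al i + be i)) / real k"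
      unfolding fvec_def cvec_def W_def al_def be_def using i
      by (simp only: if_True) (rule key_coord[OF lip op _ _ k], use xb i in auto)
    then show "(fvec n d k \<phi> x x' A i - cvec n d k \<phi> x x' (W\<^sup>2 / real k) B i)\<^sup>2 \<le> (3 * W * (L * (al i + be i)) / real k)\<^sup>2"
      by (metis abs_le_square_iff abs_of_nonneg abs_ge_zero order_trans)
  qed
  also have "\<dots> \<le> (\<Sum>i<n. 9 * W\<^sup>2 * L\<^sup>2 * (2 * ((al i)\<^sup>2 + (be i)\<^sup>2)) / (real k)\<^sup>2)"
  proof (rule sum_mono)
    fix i
    have "(3 * W * (L * (al i + be i)) / real k)\<^sup>2 = 9 * W\<^sup>2 * L\<^sup>2 * (al i + be i)\<^sup>2 / (real k)\<^sup>2"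
      by (simp add: power_divide power_mult_distrib)
    also have "\<dots> \<le> 9 * W\<^sup>2 * L\<^sup>2 * (2 * ((al i)\<^sup>2 + (be i)\<^sup>2)) / (real k)\<^sup>2"
      by (intro divide_right_mono mult_left_mono sq_sum_le) auto
    finally show "(3 * W * (L * (al i + be i)) / real k)\<^sup>2 \<le> 9 * W\<^sup>2 * L\<^sup>2 * (2 * ((al i)\<^sup>2 + (be i)\<^sup>2)) / (real k)\<^sup>2" .
  qed
  also have "\<dots> = 18 * W\<^sup>2 * L\<^sup>2 * (\<Sum>i<n. (al i)\<^sup>2 + (be i)\<^sup>2) / (real k)\<^sup>2"
    by (simp add: sum_divide_distrib sum_distrib_left) (rule sum.cong, simp_all add: algebra_simps)
  also have "(\<Sum>i<n. (al i)\<^sup>2 + (be i)\<^sup>2) = dist2 n d k x x' A B"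
    unfolding dist2_def al_def be_def vnorm_sq ..
  finally show ?thesis unfolding W_def .
qed



lemma avg_exists:
  fixes p F :: "'k \<Rightarrow> real"
  assumes "finite K" "\<forall>\<kappa>\<in>K. p \<kappa> \<ge> 0" "sum p K = 1" "(\<Sum>\<kappa>\<in>K. p \<kappa> * F \<kappa>) \<le> X"
  shows "\<exists>\<kappa>\<in>K. F \<kappa> \<le> X"
proof -
  have ne: "K \<noteq> {}" using assms(3) by auto
  define \<mu> where "\<mu> = Min (F ` K)"
  have "\<mu> \<in> F ` K" unfolding \<mu>_def using assms(1) ne by simp
  then obtain \<kappa> where \<kappa>: "\<kappa> \<in> K" "F \<kappa> = \<mu>" by auto
  have "\<mu> = (\<Sum>\<kappa>\<in>K. p \<kappa> * \<mu>)" using assms(3) by (simp flip: sum_distrib_right)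
  also have "\<dots> \<le> (\<Sum>\<kappa>\<in>K. p \<kappa> * F \<kappa>)"
    by (rule sum_mono, rule mult_left_mono) (use assms(1,2) in \<open>auto simp: \<mu>_def\<close>)
  finally have "F \<kappa> \<le> X" using \<kappa> assms(4) by auto
  then show ?thesis using \<kappa>(1) by blast
qed

lemma avg_identity_t:
  fixes p :: "'k \<Rightarrow> real"
  assumes "sum p K = 1"
  shows "(\<Sum>\<kappa>\<in>K. p \<kappa> * (c - w \<kappa>)\<^sup>2) = c\<^sup>2 - 2 * c * (\<Sum>\<kappa>\<in>K. p \<kappa> * w \<kappa>) + (\<Sum>\<kappa>\<in>K. p \<kappa> * (w \<kappa>)\<^sup>2)"
proof -
  have "(\<Sum>\<kappa>\<in>K. p \<kappa> * (c - w \<kappa>)\<^sup>2) = (\<Sum>\<kappa>\<in>K. p \<kappa> * c\<^sup>2 - 2 * c * (p \<kappa> * w \<kappa>) + p \<kappa> * (w \<kappa>)\<^sup>2)"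
    by (rule sum.cong) (simp_all add: power2_eq_square algebra_simps)
  also have "\<dots> = c\<^sup>2 * sum p K - 2 * c * (\<Sum>\<kappa>\<in>K. p \<kappa> * w \<kappa>) + (\<Sum>\<kappa>\<in>K. p \<kappa> * (w \<kappa>)\<^sup>2)"
    by (simp add: sum.distrib sum_subtractf sum_distrib_left sum_distrib_right mult_ac)
  finally show ?thesis using assms by simp
qed

lemma avg_identity:
  fixes p :: "'k \<Rightarrow> real" and w :: "'k \<Rightarrow> 't \<Rightarrow> real"
  assumes "finite K" "finite I" "sum p K = 1" "\<forall>t\<in>I. v t = (\<Sum>\<kappa>\<in>K. p \<kappa> * w \<kappa> t)"
  shows "(\<Sum>\<kappa>\<in>K. p \<kappa> * (\<Sum>t\<in>I. (e t + v t - w \<kappa> t)\<^sup>2))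
       = (\<Sum>t\<in>I. (e t)\<^sup>2) + (\<Sum>\<kappa>\<in>K. p \<kappa> * (\<Sum>t\<in>I. (w \<kappa> t)\<^sup>2)) - (\<Sum>t\<in>I. (v t)\<^sup>2)"
proof -
  have "(\<Sum>\<kappa>\<in>K. p \<kappa> * (\<Sum>t\<in>I. (e t + v t - w \<kappa> t)\<^sup>2)) = (\<Sum>t\<in>I. \<Sum>\<kappa>\<in>K. p \<kappa> * (e t + v t - w \<kappa> t)\<^sup>2)"
    by (simp add: sum_distrib_left sum.swap[of _ I])
  also have "\<dots> = (\<Sum>t\<in>I. (e t)\<^sup>2 + (\<Sum>\<kappa>\<in>K. p \<kappa> * (w \<kappa> t)\<^sup>2) - (v t)\<^sup>2)"
  proof (rule sum.cong[OF refl])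
    fix t assume t: "t \<in> I"
    have "(\<Sum>\<kappa>\<in>K. p \<kappa> * (e t + v t - w \<kappa> t)\<^sup>2)
        = (e t + v t)\<^sup>2 - 2 * (e t + v t) * v t + (\<Sum>\<kappa>\<in>K. p \<kappa> * (w \<kappa> t)\<^sup>2)"
      using avg_identity_t[OF assms(3), of "e t + v t" "\<lambda>\<kappa>. w \<kappa> t"] assms(4) t by simp
    then show "(\<Sum>\<kappa>\<in>K. p \<kappa> * (e t + v t - w \<kappa> t)\<^sup>2) = (e t)\<^sup>2 + (\<Sum>\<kappa>\<in>K. p \<kappa> * (w \<kappa> t)\<^sup>2) - (v t)\<^sup>2"
      by (simp add: power2_eq_square algebra_simps)
  qed
  also have "\<dots> = (\<Sum>t\<in>I. (e t)\<^sup>2) + (\<Sum>\<kappa>\<in>K. p \<kappa> * (\<Sum>t\<in>I. (w \<kappa> t)\<^sup>2)) - (\<Sum>t\<in>I. (v t)\<^sup>2)"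
    by (simp add: sum.distrib sum_subtractf sum_distrib_left sum.swap[of _ I])
  finally show ?thesis .
qed

lemma maurey:
  fixes p :: "'k \<Rightarrow> real" and w :: "'k \<Rightarrow> 't \<Rightarrow> real"
  assumes K: "finite K" and I: "finite I" and p0: "\<forall>\<kappa>\<in>K. p \<kappa> \<ge> 0" and p1: "sum p K = 1"
    and v: "\<forall>t\<in>I. v t = (\<Sum>\<kappa>\<in>K. p \<kappa> * w \<kappa> t)"
    and R: "\<forall>\<kappa>\<in>K. (\<Sum>t\<in>I. (w \<kappa> t)\<^sup>2) \<le> R"
  shows "\<exists>g. (\<forall>s. g s \<in> K) \<and> (\<Sum>t\<in>I. (real m * v t - (\<Sum>s<m. w (g s) t))\<^sup>2) \<le> real m * R"
proof (induction m)
  case 0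
  have "K \<noteq> {}" using p1 by auto
  then obtain \<kappa>0 where "\<kappa>0 \<in> K" by auto
  then show ?case by (intro exI[of _ "\<lambda>_. \<kappa>0"]) simp
next
  case (Suc m)
  then obtain g where g: "\<forall>s. g s \<in> K" "(\<Sum>t\<in>I. (real m * v t - (\<Sum>s<m. w (g s) t))\<^sup>2) \<le> real m * R"
    by blast
  define e where "e t = real m * v t - (\<Sum>s<m. w (g s) t)" for t
  have "(\<Sum>\<kappa>\<in>K. p \<kappa> * (\<Sum>t\<in>I. (e t + v t - w \<kappa> t)\<^sup>2))
       = (\<Sum>t\<in>I. (e t)\<^sup>2) + (\<Sum>\<kappa>\<in>K. p \<kappa> * (\<Sum>t\<in>I. (w \<kappa> t)\<^sup>2)) - (\<Sum>t\<in>I. (v t)\<^sup>2)"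
    by (rule avg_identity[OF K I p1 v])
  also have "\<dots> \<le> real m * R + R"
  proof -
    have "(\<Sum>\<kappa>\<in>K. p \<kappa> * (\<Sum>t\<in>I. (w \<kappa> t)\<^sup>2)) \<le> (\<Sum>\<kappa>\<in>K. p \<kappa> * R)"
      by (rule sum_mono, rule mult_left_mono) (use R p0 in auto)
    also have "\<dots> = R" using p1 by (simp flip: sum_distrib_right)
    finally show ?thesis using g(2) sum_nonneg[of I "\<lambda>t. (v t)\<^sup>2"] unfolding e_def by force
  qed
  finally obtain \<kappa> where \<kappa>: "\<kappa> \<in> K" "(\<Sum>t\<in>I. (e t + v t - w \<kappa> t)\<^sup>2) \<le> real m * R + R"
    using avg_exists[OF K p0 p1, of "\<lambda>\<kappa>. (\<Sum>t\<in>I. (e t + v t - w \<kappa> t)\<^sup>2)"] by blast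
  define g' where "g' = g(m := \<kappa>)"
  have "\<forall>s. g' s \<in> K" using g(1) \<kappa>(1) unfolding g'_def by auto
  moreover have "(\<Sum>t\<in>I. (real (Suc m) * v t - (\<Sum>s<Suc m. w (g' s) t))\<^sup>2) \<le> real (Suc m) * R"
  proof -
    have "(\<Sum>s<m. w (g' s) t) = (\<Sum>s<m. w (g s) t)" for t
      unfolding g'_def by (rule sum.cong) auto
    then have eq: "real (Suc m) * v t - (\<Sum>s<Suc m. w (g' s) t) = e t + v t - w \<kappa> t" for t
      unfolding e_def by (simp add: g'_def algebra_simps)
    have "(\<Sum>t\<in>I. (real (Suc m) * v t - (\<Sum>s<Suc m. w (g' s) t))\<^sup>2) = (\<Sum>t\<in>I. (e t + v t - w \<kappa> t)\<^sup>2)"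
      by (rule sum.cong[OF refl]) (simp only: eq)
    then show ?thesis using \<kappa>(2) by (simp add: algebra_simps)
  qed
  ultimately show ?case by blast
qed

lemma jensen_norm:
  fixes p :: "'k \<Rightarrow> real" and w :: "'k \<Rightarrow> 't \<Rightarrow> real"
  assumes K: "finite K" and I: "finite I" and p0: "\<forall>\<kappa>\<in>K. p \<kappa> \<ge> 0" and p1: "sum p K = 1"
    and v: "\<forall>t\<in>I. v t = (\<Sum>\<kappa>\<in>K. p \<kappa> * w \<kappa> t)"
    and R: "\<forall>\<kappa>\<in>K. (\<Sum>t\<in>I. (w \<kappa> t)\<^sup>2) \<le> R"
  shows "(\<Sum>t\<in>I. (v t)\<^sup>2) \<le> R"
proof -
  have "0 \<le> (\<Sum>\<kappa>\<in>K. p \<kappa> * (\<Sum>t\<in>I. (0 + v t - w \<kappa> t)\<^sup>2))"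
    using p0 by (intro sum_nonneg mult_nonneg_nonneg) (auto intro: sum_nonneg)
  also have "\<dots> = (\<Sum>t\<in>I. 0\<^sup>2) + (\<Sum>\<kappa>\<in>K. p \<kappa> * (\<Sum>t\<in>I. (w \<kappa> t)\<^sup>2)) - (\<Sum>t\<in>I. (v t)\<^sup>2)"
    by (rule avg_identity[OF K I p1 v, of "\<lambda>_. 0"])
  finally have "(\<Sum>t\<in>I. (v t)\<^sup>2) \<le> (\<Sum>\<kappa>\<in>K. p \<kappa> * (\<Sum>t\<in>I. (w \<kappa> t)\<^sup>2))" by simp
  also have "\<dots> \<le> (\<Sum>\<kappa>\<in>K. p \<kappa> * R)"
    by (rule sum_mono, rule mult_left_mono) (use R p0 in auto)
  also have "\<dots> = R" using p1 by (simp flip: sum_distrib_right)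
  finally show ?thesis .
qed



lemma sum_prod3: "(\<Sum>t\<in>S \<times> T \<times> (UNIV::bool set). h t) = (\<Sum>a\<in>S. \<Sum>b\<in>T. h (a,b,True) + h (a,b,False))"
proof -
  have "(\<Sum>t\<in>S \<times> T \<times> (UNIV::bool set). h t) = (\<Sum>a\<in>S. \<Sum>y\<in>T \<times> (UNIV::bool set). h (a,y))"
    by (subst sum.cartesian_product) simp
  also have "\<dots> = (\<Sum>a\<in>S. \<Sum>b\<in>T. \<Sum>c\<in>(UNIV::bool set). h (a,b,c))"
    by (subst sum.cartesian_product) simp
  finally show ?thesis by (simp add: UNIV_bool add.commute)
qed

definition Xv :: "(nat\<Rightarrow>nat\<Rightarrow>real) \<Rightarrow> (nat\<Rightarrow>nat\<Rightarrow>real) \<Rightarrow> nat \<Rightarrow> bool \<Rightarrow> nat \<Rightarrow> real" where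
  "Xv x x' l \<beta> = (if \<beta> then x l else x' l)"

definition Phi :: "nat \<Rightarrow> (nat\<Rightarrow>nat\<Rightarrow>real) \<Rightarrow> (nat\<Rightarrow>nat\<Rightarrow>real) \<Rightarrow> (nat\<Rightarrow>nat\<Rightarrow>real) \<Rightarrow> nat \<times> nat \<times> bool \<Rightarrow> real" where
  "Phi d x x' M = (\<lambda>(l,j,\<beta>). tmatvec d M (Xv x x' l \<beta>) j)"

definition ccf :: "nat \<Rightarrow> (nat\<Rightarrow>nat\<Rightarrow>real) \<Rightarrow> (nat\<Rightarrow>nat\<Rightarrow>real) \<Rightarrow> nat \<Rightarrow> real" where
  "ccf n x x' i = sqrt (\<Sum>l<n. (x l i)\<^sup>2 + (x' l i)\<^sup>2)"

definition Dm :: "nat \<Rightarrow> (nat\<Rightarrow>nat\<Rightarrow>real) \<Rightarrow> (nat\<Rightarrow>nat\<Rightarrow>real) \<Rightarrow> real \<Rightarrow> (nat \<times> nat \<times> bool) option \<Rightarrow> nat \<Rightarrow> nat \<Rightarrow> real" where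
  "Dm n x x' s \<kappa> = (case \<kappa> of None \<Rightarrow> (\<lambda>_ _. 0)
     | Some (i0,j0,\<sigma>) \<Rightarrow> (\<lambda>i j. if i = i0 \<and> j = j0 \<and> ccf n x x' i0 > 0
            then (if \<sigma> then s / ccf n x x' i0 else - (s / ccf n x x' i0)) else 0))"

definition qf :: "nat \<Rightarrow> (nat\<Rightarrow>nat\<Rightarrow>real) \<Rightarrow> (nat\<Rightarrow>nat\<Rightarrow>real) \<Rightarrow> real \<Rightarrow> (nat\<Rightarrow>nat\<Rightarrow>real) \<Rightarrow> nat \<times> nat \<times> bool \<Rightarrow> real" where
  "qf n x x' s A z = (case z of (i0,j0,\<sigma>) \<Rightarrow>
      (if \<sigma> then max (A i0 j0) 0 else max (- A i0 j0) 0) * ccf n x x' i0 / s)"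

definition Zs :: "nat \<Rightarrow> nat \<Rightarrow> (nat \<times> nat \<times> bool) set" where
  "Zs d k = {..<d} \<times> {..<k} \<times> UNIV"

definition Ks :: "nat \<Rightarrow> nat \<Rightarrow> (nat \<times> nat \<times> bool) option set" where
  "Ks d k = insert None (Some ` Zs d k)"

definition pf where
  "pf n d k x x' s A \<kappa> = (case \<kappa> of None \<Rightarrow> 1 - sum (qf n x x' s A) (Zs d k) | Some z \<Rightarrow> qf n x x' s A z)"

definition Is :: "nat \<Rightarrow> nat \<Rightarrow> (nat \<times> nat \<times> bool) set" where
  "Is n k = {..<n} \<times> {..<k} \<times> UNIV"

lemma finite_Zs[simp]: "finite (Zs d k)" unfolding Zs_def by simp
lemma finite_Ks[simp]: "finite (Ks d k)" unfolding Ks_def by simp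
lemma finite_Is[simp]: "finite (Is n k)" unfolding Is_def by simp

lemma card_Ks: "card (Ks d k) = 2 * d * k + 1"
proof -
  have "card (Zs d k) = d * k * 2" unfolding Zs_def by (simp add: card_cartesian_product UNIV_bool)
  moreover have "card (Some ` Zs d k) = card (Zs d k)" by (rule card_image) simp
  ultimately show ?thesis unfolding Ks_def by (simp add: card_insert_if)
qed

lemma dist2_Phi: "dist2 n d k x x' A B = (\<Sum>t\<in>Is n k. (Phi d x x' A t - Phi d x x' B t)\<^sup>2)"
  unfolding dist2_def Is_def sum_prod3 Phi_def Xv_def by (simp add: sum.distrib)

lemma ccf_sq: "(ccf n x x' i)\<^sup>2 = (\<Sum>l<n. (x l i)\<^sup>2 + (x' l i)\<^sup>2)"
  unfolding ccf_def by (subst real_sqrt_pow2) (auto intro!: sum_nonneg)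

lemma ccf_nonneg: "0 \<le> ccf n x x' i" unfolding ccf_def by (auto intro!: sum_nonneg)

lemma ccf_zero: assumes "ccf n x x' i = 0" "l < n" shows "x l i = 0" "x' l i = 0"
proof -
  have "(\<Sum>l<n. (x l i)\<^sup>2 + (x' l i)\<^sup>2) = 0" using ccf_sq[of n x x' i] assms(1) by simp
  then have "\<forall>l\<in>{..<n}. (x l i)\<^sup>2 + (x' l i)\<^sup>2 = 0"
    by (subst sum_nonneg_eq_0_iff[symmetric]) (auto intro: add_nonneg_nonneg)
  then have "(x l i)\<^sup>2 + (x' l i)\<^sup>2 = 0" using assms(2) by auto
  then show "x l i = 0" "x' l i = 0" by (auto simp: add_nonneg_eq_0_iff)
qed

lemma ccf_sum: "(\<Sum>i<d. (ccf n x x' i)\<^sup>2) = (\<Sum>l<n. (vnorm d (x l))\<^sup>2 + (vnorm d (x' l))\<^sup>2)"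
  unfolding ccf_sq vnorm_sq by (simp add: sum.distrib sum.swap[of _ "{..<d}"])

lemma Phi_D_Some:
  assumes "i0 < d"
  shows "Phi d x x' (Dm n x x' s (Some (i0,j0,\<sigma>))) (l,j,\<beta>)
       = (if j = j0 \<and> ccf n x x' i0 > 0 then (if \<sigma> then s / ccf n x x' i0 else - (s / ccf n x x' i0)) * Xv x x' l \<beta> i0 else 0)"
proof -
  have "Phi d x x' (Dm n x x' s (Some (i0,j0,\<sigma>))) (l,j,\<beta>)
     = (\<Sum>i<d. (if i = i0 \<and> j = j0 \<and> ccf n x x' i0 > 0 then (if \<sigma> then s / ccf n x x' i0 else - (s / ccf n x x' i0)) else 0) * Xv x x' l \<beta> i)"
    unfolding Phi_def Dm_def tmatvec_def by simp
  also have "\<dots> = (\<Sum>i<d. if i = i0 then (if j = j0 \<and> ccf n x x' i0 > 0 then (if \<sigma> then s / ccf n x x' i0 else - (s / ccf n x x' i0)) * Xv x x' l \<beta> i0 else 0) else 0)"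
    by (rule sum.cong) auto
  also have "\<dots> = (if j = j0 \<and> ccf n x x' i0 > 0 then (if \<sigma> then s / ccf n x x' i0 else - (s / ccf n x x' i0)) * Xv x x' l \<beta> i0 else 0)"
    using assms by (simp add: sum.delta)
  finally show ?thesis .
qed

lemma Phi_D_None: "Phi d x x' (Dm n x x' s None) t = 0"
  unfolding Phi_def Dm_def tmatvec_def by (auto split: prod.splits)

lemma sum_Ks: "(\<Sum>\<kappa>\<in>Ks d k. h \<kappa>) = h None + (\<Sum>z\<in>Zs d k. h (Some z))"
proof -
  have "(\<Sum>\<kappa>\<in>Ks d k. h \<kappa>) = h None + (\<Sum>\<kappa>\<in>Some ` Zs d k. h \<kappa>)"
    unfolding Ks_def by (subst sum.insert) auto
  also have "(\<Sum>\<kappa>\<in>Some ` Zs d k. h \<kappa>) = (\<Sum>z\<in>Zs d k. h (Some z))"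
    by (subst sum.reindex) auto
  finally show ?thesis .
qed

context
  fixes n d k :: nat and x x' :: "nat \<Rightarrow> nat \<Rightarrow> real" and a b s :: real and A :: "nat \<Rightarrow> nat \<Rightarrow> real"
  assumes spos: "s > 0"
begin

lemma decomp:
  assumes t: "t \<in> Is n k"
  shows "Phi d x x' A t = (\<Sum>\<kappa>\<in>Ks d k. pf n d k x x' s A \<kappa> * Phi d x x' (Dm n x x' s \<kappa>) t)"
proof -
  obtain l j \<beta> where tt: "t = (l,j,\<beta>)" and l: "l < n" and j: "j < k" using t unfolding Is_def by auto
  let ?c = "ccf n x x'"
  have "(\<Sum>\<kappa>\<in>Ks d k. pf n d k x x' s A \<kappa> * Phi d x x' (Dm n x x' s \<kappa>) t)
      = (\<Sum>z\<in>Zs d k. qf n x x' s A z * Phi d x x' (Dm n x x' s (Some z)) t)"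
    unfolding sum_Ks by (simp add: Phi_D_None pf_def)
  also have "\<dots> = (\<Sum>i0<d. \<Sum>j0<k. (if j = j0 \<and> ?c i0 > 0 then A i0 j0 * Xv x x' l \<beta> i0 else 0))"
    unfolding Zs_def sum_prod3 tt
  proof (intro sum.cong refl)
    fix i0 j0 assume i0': "i0 \<in> {..<d}"
    then have i0: "i0 < d" by simp
    have key: "?c i0 > 0 \<Longrightarrow> max (A i0 j0) 0 * ?c i0 / s * (s / ?c i0) + max (- A i0 j0) 0 * ?c i0 / s * (- (s / ?c i0)) = A i0 j0"
      using spos by (auto simp: max_def field_simps)
    show "qf n x x' s A (i0, j0, True) * Phi d x x' (Dm n x x' s (Some (i0, j0, True))) (l, j, \<beta>) +
          qf n x x' s A (i0, j0, False) * Phi d x x' (Dm n x x' s (Some (i0, j0, False))) (l, j, \<beta>) =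
          (if j = j0 \<and> 0 < ?c i0 then A i0 j0 * Xv x x' l \<beta> i0 else 0)"
    proof (cases "j = j0 \<and> 0 < ?c i0")
      case True
      have "qf n x x' s A (i0, j0, True) * ((s / ?c i0) * Xv x x' l \<beta> i0) +
          qf n x x' s A (i0, j0, False) * ((- (s / ?c i0)) * Xv x x' l \<beta> i0)
         = (max (A i0 j0) 0 * ?c i0 / s * (s / ?c i0) + max (- A i0 j0) 0 * ?c i0 / s * (- (s / ?c i0))) * Xv x x' l \<beta> i0"
        unfolding qf_def by (simp add: algebra_simps)
      also have "\<dots> = A i0 j0 * Xv x x' l \<beta> i0" using True key by simp
      finally show ?thesis unfolding Phi_D_Some[OF i0] using True by simp
    next
      case False
      show ?thesis unfolding Phi_D_Some[OF i0] if_not_P[OF False] by simp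
    qed
  qed
  also have "\<dots> = (\<Sum>i0<d. if ?c i0 > 0 then A i0 j * Xv x x' l \<beta> i0 else 0)"
  proof (intro sum.cong refl)
    fix i0
    have "(\<Sum>j0<k. (if j = j0 \<and> ?c i0 > 0 then A i0 j0 * Xv x x' l \<beta> i0 else 0))
        = (\<Sum>j0<k. if j = j0 then (if ?c i0 > 0 then A i0 j0 * Xv x x' l \<beta> i0 else 0) else 0)"
      by (intro sum.cong) auto
    also have "\<dots> = (if ?c i0 > 0 then A i0 j * Xv x x' l \<beta> i0 else 0)" using j by (simp add: sum.delta)
    finally show "(\<Sum>j0<k. (if j = j0 \<and> ?c i0 > 0 then A i0 j0 * Xv x x' l \<beta> i0 else 0)) = (if ?c i0 > 0 then A i0 j * Xv x x' l \<beta> i0 else 0)" .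
  qed
  also have "\<dots> = (\<Sum>i0<d. A i0 j * Xv x x' l \<beta> i0)"
  proof (intro sum.cong refl)
    fix i0
    have "\<not> ?c i0 > 0 \<Longrightarrow> Xv x x' l \<beta> i0 = 0"
      using ccf_nonneg[of n x x' i0] ccf_zero[of n x x' i0 l] l unfolding Xv_def by auto
    then show "(if ?c i0 > 0 then A i0 j * Xv x x' l \<beta> i0 else 0) = A i0 j * Xv x x' l \<beta> i0" by auto
  qed
  also have "\<dots> = Phi d x x' A t" unfolding tt Phi_def tmatvec_def by simp
  finally show ?thesis ..
qed

lemma D_norm:
  assumes "\<kappa> \<in> Ks d k"
  shows "(\<Sum>t\<in>Is n k. (Phi d x x' (Dm n x x' s \<kappa>) t)\<^sup>2) \<le> s\<^sup>2"
proof (cases \<kappa>)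
  case None then show ?thesis by (simp add: Phi_D_None)
next
  case (Some z)
  then obtain i0 j0 \<sigma> where z: "\<kappa> = Some (i0,j0,\<sigma>)" and i0: "i0 < d" and j0: "j0 < k"
    using assms unfolding Ks_def Zs_def by auto
  let ?c = "ccf n x x' i0"
  have "(\<Sum>t\<in>Is n k. (Phi d x x' (Dm n x x' s \<kappa>) t)\<^sup>2)
      = (\<Sum>l<n. \<Sum>j<k. if j = j0 then (if ?c > 0 then (s / ?c)\<^sup>2 * ((x l i0)\<^sup>2 + (x' l i0)\<^sup>2) else 0) else 0)"
    unfolding Is_def sum_prod3 z
  proof (intro sum.cong refl)
    fix l j
    show "(Phi d x x' (Dm n x x' s (Some (i0, j0, \<sigma>))) (l, j, True))\<^sup>2 +
          (Phi d x x' (Dm n x x' s (Some (i0, j0, \<sigma>))) (l, j, False))\<^sup>2 =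
          (if j = j0 then if 0 < ?c then (s / ?c)\<^sup>2 * ((x l i0)\<^sup>2 + (x' l i0)\<^sup>2) else 0 else 0)"
      unfolding Phi_D_Some[OF i0] Xv_def
      by (cases "j = j0 \<and> 0 < ?c") (auto simp: power_mult_distrib distrib_left)
  qed
  also have "\<dots> = (if ?c > 0 then (s / ?c)\<^sup>2 * ?c\<^sup>2 else 0)"
    using j0 by (simp add: sum.delta ccf_sq sum_distrib_left)
  also have "\<dots> \<le> s\<^sup>2" by (auto simp: power_divide)
  finally show ?thesis .
qed

end



lemma qf_sum:
  assumes A: "norm21 d k A \<le> a" and xb: "\<forall>l<n. vnorm d (x l) \<le> b \<and> vnorm d (x' l) \<le> b"
    and s: "s = sqrt (2 * real n) * a * b" and spos: "s > 0" and b: "b > 0"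
  shows "sum (qf n x x' s A) (Zs d k) \<le> 1"
proof -
  let ?c = "ccf n x x'"
  have "sum (qf n x x' s A) (Zs d k) = (\<Sum>i<d. \<Sum>j<k. \<bar>A i j\<bar> * ?c i / s)"
    unfolding Zs_def sum_prod3 qf_def
    by (intro sum.cong refl) (auto simp: max_def add_divide_distrib[symmetric] distrib_right[symmetric])
  also have "\<dots> = (\<Sum>j<k. \<Sum>i<d. \<bar>A i j\<bar> * \<bar>?c i\<bar>) / s"
    using ccf_nonneg[of n x x'] by (simp add: sum_divide_distrib sum.swap[of _ "{..<d}"])
  also have "\<dots> \<le> (\<Sum>j<k. vnorm d (\<lambda>i. A i j) * (sqrt (2 * real n) * b)) / s"
  proof (intro divide_right_mono sum_mono)
    fix j
    have "(\<Sum>i<d. \<bar>A i j\<bar> * \<bar>?c i\<bar>) \<le> vnorm d (\<lambda>i. A i j) * vnorm d ?c"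
      unfolding vnorm_L2 by (rule L2_set_mult_ineq)
    also have "vnorm d ?c \<le> sqrt (2 * real n) * b"
    proof -
      have "(\<Sum>i<d. (?c i)\<^sup>2) = (\<Sum>l<n. (vnorm d (x l))\<^sup>2 + (vnorm d (x' l))\<^sup>2)" by (rule ccf_sum)
      also have "\<dots> \<le> (\<Sum>l<n. b\<^sup>2 + b\<^sup>2)"
        using xb by (intro sum_mono add_mono power_mono) auto
      also have "\<dots> = (sqrt (2 * real n) * b)\<^sup>2" using b by (simp add: power_mult_distrib)
      finally have "sqrt (\<Sum>i<d. (?c i)\<^sup>2) \<le> sqrt ((sqrt (2 * real n) * b)\<^sup>2)"
        by (rule real_sqrt_le_mono)
      then show ?thesis unfolding vnorm_def using b by simp
    qed
    then have "vnorm d (\<lambda>i. A i j) * vnorm d ?c \<le> vnorm d (\<lambda>i. A i j) * (sqrt (2 * real n) * b)"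
      by (simp add: mult_left_mono)
    finally show "(\<Sum>i<d. \<bar>A i j\<bar> * \<bar>?c i\<bar>) \<le> vnorm d (\<lambda>i. A i j) * (sqrt (2 * real n) * b)" .
  qed (use spos in auto)
  also have "\<dots> = norm21 d k A * (sqrt (2 * real n) * b) / s"
    unfolding norm21_def by (simp add: sum_distrib_right)
  also have "\<dots> \<le> a * (sqrt (2 * real n) * b) / s"
    using A spos b by (intro divide_right_mono mult_right_mono) auto
  also have "a * (sqrt (2 * real n) * b) = s" using s by (simp add: mult_ac)
  then have "a * (sqrt (2 * real n) * b) / s = 1" using spos by simp
  finally show ?thesis .
qed

lemma pf_props:
  assumes "sum (qf n x x' s A) (Zs d k) \<le> 1" and spos: "s > 0"
  shows "\<forall>\<kappa>\<in>Ks d k. pf n d k x x' s A \<kappa> \<ge> 0" "sum (pf n d k x x' s A) (Ks d k) = 1"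
proof -
  show "\<forall>\<kappa>\<in>Ks d k. pf n d k x x' s A \<kappa> \<ge> 0"
    using assms ccf_nonneg[of n x x'] unfolding Ks_def pf_def qf_def by (auto split: if_splits)
  show "sum (pf n d k x x' s A) (Ks d k) = 1"
    unfolding sum_Ks pf_def by simp
qed

definition Bg where
  "Bg n x x' s m g = (\<lambda>i j. (\<Sum>r<m. Dm n x x' s (g r) i j) / real m)"

lemma Phi_Bg: "Phi d x x' (Bg n x x' s m g) t = (\<Sum>r<m. Phi d x x' (Dm n x x' s (g r)) t) / real m"
  unfolding Phi_def Bg_def tmatvec_def
  by (auto simp: sum_divide_distrib sum_distrib_right sum.swap[of _ "{..<d}"] split: prod.splits)

lemma cover_from_centers:
  assumes "finite C" "\<forall>u\<in>S. \<exists>c\<in>C. vnorm n (\<lambda>i. u i - c i) \<le> \<epsilon> / 2"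
  shows "covering_number n S \<epsilon> \<le> card C"
proof -
  define C' where "C' = {c\<in>C. \<exists>u\<in>S. vnorm n (\<lambda>i. u i - c i) \<le> \<epsilon> / 2}"
  define h where "h c = (SOME u. u \<in> S \<and> vnorm n (\<lambda>i. u i - c i) \<le> \<epsilon> / 2)" for c
  have h: "h c \<in> S \<and> vnorm n (\<lambda>i. h c i - c i) \<le> \<epsilon> / 2" if cC: "c \<in> C'" for c
  proof -
    obtain u where "u \<in> S \<and> vnorm n (\<lambda>i. u i - c i) \<le> \<epsilon> / 2" using cC unfolding C'_def by blast
    then show ?thesis unfolding h_def by (rule someI[where P="\<lambda>u. u \<in> S \<and> vnorm n (\<lambda>i. u i - c i) \<le> \<epsilon> / 2"])
  qed
  define Bs where "Bs = h ` C'"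
  have fin: "finite Bs" unfolding Bs_def C'_def using assms(1) by simp
  have sub: "Bs \<subseteq> S" unfolding Bs_def using h by auto
  have cov: "\<forall>u\<in>S. \<exists>w\<in>Bs. vnorm n (\<lambda>i. u i - w i) \<le> \<epsilon>"
  proof
    fix u assume u: "u \<in> S"
    then obtain c where c: "c \<in> C" "vnorm n (\<lambda>i. u i - c i) \<le> \<epsilon> / 2" using assms(2) by blast
    then have cC: "c \<in> C'" unfolding C'_def using u by auto
    have "vnorm n (\<lambda>i. u i - h c i) \<le> vnorm n (\<lambda>i. u i - c i) + vnorm n (\<lambda>i. c i - h c i)"
      by (rule vnorm_diff_triangle)
    also have "vnorm n (\<lambda>i. c i - h c i) = vnorm n (\<lambda>i. h c i - c i)" by (rule vnorm_commute)
    finally have "vnorm n (\<lambda>i. u i - h c i) \<le> \<epsilon>" using c(2) h[OF cC] by linarith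
    then show "\<exists>w\<in>Bs. vnorm n (\<lambda>i. u i - w i) \<le> \<epsilon>" using cC unfolding Bs_def by blast
  qed
  have "covering_number n S \<epsilon> \<le> card Bs"
    unfolding covering_number_def by (rule cInf_lower) (use fin sub cov in auto)
  also have "card Bs \<le> card C'" unfolding Bs_def using assms(1) C'_def by (simp add: card_image_le)
  also have "card C' \<le> card C" unfolding C'_def using assms(1) by (simp add: card_mono)
  finally show ?thesis .
qed



lemma F_set_fvec: "F_set n d k \<phi> x x' G = (fvec n d k \<phi> x x') ` G"
  unfolding F_set_def fvec_def by simp

lemma main_inner:
  fixes n d k :: nat and \<phi> :: "real \<Rightarrow> real" and L b a a' \<epsilon> :: real and x x' :: "nat \<Rightarrow> nat \<Rightarrow> real"
  assumes n: "n \<ge> 1" and d: "d \<ge> 1" and k: "k \<ge> 1" and lip: "L-lipschitz_on UNIV \<phi>"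
    and b: "b > 0" and xb: "\<forall>i<n. vnorm d (x i) \<le> b \<and> vnorm d (x' i) \<le> b"
    and a: "a > 0" and a': "a' > 0" and eps: "\<epsilon> > 0"
  shows "ln (real (covering_number n (F_set n d k \<phi> x x' (J_set d k a a')) \<epsilon>))
       \<le> 2304 * (a\<^sup>2 * a'\<^sup>2 * b ^ 4 * real n * L ^ 4) / ((real k)\<^sup>2 * \<epsilon>\<^sup>2) * ln (2 * real d * real k)"
proof -
  have L: "0 \<le> L" using lip unfolding lipschitz_on_def by auto
  define P where "P = a\<^sup>2 * a'\<^sup>2 * b ^ 4 * real n * L ^ 4 / (real k)\<^sup>2"
  define Q where "Q = P / \<epsilon>\<^sup>2"
  have P0: "P \<ge> 0" unfolding P_def using L by simp
  have Q0: "Q \<ge> 0" unfolding Q_def using P0 by simp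
  have RHS: "2304 * (a\<^sup>2 * a'\<^sup>2 * b ^ 4 * real n * L ^ 4) / ((real k)\<^sup>2 * \<epsilon>\<^sup>2) * ln (2 * real d * real k)
       = 2304 * Q * ln (2 * real d * real k)"
    unfolding Q_def P_def by (simp add: divide_divide_eq_left)
  have dk1: "real d * real k \<ge> 1" using mult_mono[of 1 "real d" 1 "real k"] d k by simp
  have dk: "2 * real d * real k \<ge> 2" using dk1 by simp
  have ln0: "0 \<le> ln (2 * real d * real k)" using dk by simp
  define W where "W = 2*L*b*a'"
  define M where "M = W\<^sup>2 / real k"
  define s where "s = sqrt (2 * real n) * a * b"
  have spos: "s > 0" unfolding s_def using n a b by simp
  have s2: "s\<^sup>2 = 2 * real n * a\<^sup>2 * b\<^sup>2" unfolding s_def by (simp add: power_mult_distrib)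
  define S where "S = F_set n d k \<phi> x x' (J_set d k a a')"
  have approx: "vnorm n (\<lambda>i. fvec n d k \<phi> x x' A i - cvec n d k \<phi> x x' M B i) \<le> \<epsilon> / 2"
    if AJ: "A \<in> J_set d k a a'" and dB: "dist2 n d k x x' A B \<le> s\<^sup>2 / mm"
       and mm: "mm > 0" and mmQ: "576 * Q \<le> mm" for A B mm
  proof -
    have op: "opnorm d k A \<le> a'" using AJ unfolding J_set_def by auto
    have "(vnorm n (\<lambda>i. fvec n d k \<phi> x x' A i - cvec n d k \<phi> x x' M B i))\<^sup>2
         \<le> 18 * W\<^sup>2 * L\<^sup>2 * dist2 n d k x x' A B / (real k)\<^sup>2"
      unfolding M_def W_def by (rule cover_dist[OF lip op xb k])
    also have "\<dots> \<le> 18 * W\<^sup>2 * L\<^sup>2 * (s\<^sup>2 / mm) / (real k)\<^sup>2"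
      by (intro divide_right_mono mult_left_mono dB) auto
    also have "\<dots> = 144 * P / mm"
      unfolding s2 W_def P_def by (simp add: power_mult_distrib power2_eq_square power4_eq_xxxx mult_ac)
    also have "\<dots> \<le> (\<epsilon> / 2)\<^sup>2"
    proof -
      have "576 * P \<le> mm * \<epsilon>\<^sup>2" using mmQ eps unfolding Q_def by (simp add: pos_divide_le_eq)
      then show ?thesis using mm by (simp add: pos_divide_le_eq power_divide mult.commute)
    qed
    finally have "(vnorm n (\<lambda>i. fvec n d k \<phi> x x' A i - cvec n d k \<phi> x x' M B i))\<^sup>2 \<le> (\<epsilon> / 2)\<^sup>2" .
    then show ?thesis by (rule power2_le_imp_le) (use eps in simp)
  qed
  have norm_Phi: "(\<Sum>t\<in>Is n k. (Phi d x x' A t)\<^sup>2) \<le> s\<^sup>2" if AJ: "A \<in> J_set d k a a'" for A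
  proof -
    have "sum (qf n x x' s A) (Zs d k) \<le> 1"
      using AJ xb spos b unfolding J_set_def by (intro qf_sum[OF _ _ s_def spos b]) auto
    note pp = pf_props[OF this spos]
    show ?thesis
      by (rule jensen_norm[OF finite_Ks finite_Is pp(1) pp(2)])
         (use decomp[where A=A and s=s and n=n and k=k and d=d and x=x and x'=x', OF spos]
              D_norm[where s=s and n=n and k=k and d=d and x=x and x'=x', OF spos] in auto)
  qed
  show ?thesis
  proof (cases "576 * Q \<le> 1")
    case True
    define c0 where "c0 = cvec n d k \<phi> x x' M (Dm n x x' s None)"
    have "covering_number n S \<epsilon> \<le> card {c0}"
    proof (rule cover_from_centers)
      show "\<forall>u\<in>S. \<exists>c\<in>{c0}. vnorm n (\<lambda>i. u i - c i) \<le> \<epsilon> / 2"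
      proof
        fix u assume "u \<in> S"
        then obtain A where AJ: "A \<in> J_set d k a a'" and u: "u = fvec n d k \<phi> x x' A"
          unfolding S_def F_set_fvec by auto
        have "dist2 n d k x x' A (Dm n x x' s None) \<le> s\<^sup>2 / 1"
          unfolding dist2_Phi Phi_D_None using norm_Phi[OF AJ] by simp
        from approx[OF AJ this _ True] show "\<exists>c\<in>{c0}. vnorm n (\<lambda>i. u i - c i) \<le> \<epsilon> / 2"
          unfolding u c0_def by simp
      qed
    qed simp
    then have "covering_number n S \<epsilon> \<le> 1" by simp
    then have "ln (real (covering_number n S \<epsilon>)) \<le> 0"
      by (cases "covering_number n S \<epsilon> = 0") auto
    also have "0 \<le> 2304 * Q * ln (2 * real d * real k)" using Q0 ln0 by simp
    finally show ?thesis unfolding RHS S_def .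
  next
    case False
    define m where "m = nat \<lceil>576 * Q\<rceil>"
    have m1: "real m \<ge> 576 * Q" unfolding m_def by linarith
    have m2: "real m < 576 * Q + 1" unfolding m_def using Q0 by linarith
    have mpos: "real m > 0" using m1 False by linarith
    define C where "C = (\<lambda>g. cvec n d k \<phi> x x' M (Bg n x x' s m g)) ` (PiE {..<m} (\<lambda>_. Ks d k))"
    have finC: "finite C" unfolding C_def by (simp add: finite_PiE)
    have cardC: "card C \<le> (2 * d * k + 1) ^ m"
    proof -
      have "card C \<le> card (PiE {..<m} (\<lambda>_. Ks d k))" unfolding C_def
        by (rule card_image_le) (simp add: finite_PiE)
      also have "\<dots> = (2 * d * k + 1) ^ m" by (simp add: card_PiE card_Ks)
      finally show ?thesis .
    qed
    have "covering_number n S \<epsilon> \<le> card C"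
    proof (rule cover_from_centers[OF finC])
      show "\<forall>u\<in>S. \<exists>c\<in>C. vnorm n (\<lambda>i. u i - c i) \<le> \<epsilon> / 2"
      proof
        fix u assume "u \<in> S"
        then obtain A where AJ: "A \<in> J_set d k a a'" and u: "u = fvec n d k \<phi> x x' A"
          unfolding S_def F_set_fvec by auto
        have "sum (qf n x x' s A) (Zs d k) \<le> 1"
          using AJ xb spos b unfolding J_set_def by (intro qf_sum[OF _ _ s_def spos b]) auto
        note pp = pf_props[OF this spos]
        obtain g where g: "\<forall>r. g r \<in> Ks d k"
          "(\<Sum>t\<in>Is n k. (real m * Phi d x x' A t - (\<Sum>r<m. Phi d x x' (Dm n x x' s (g r)) t))\<^sup>2) \<le> real m * s\<^sup>2"
          using maurey[where v="Phi d x x' A" and w="\<lambda>\<kappa>. Phi d x x' (Dm n x x' s \<kappa>)"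
              and R="s\<^sup>2" and m=m, OF finite_Ks finite_Is pp(1) pp(2)]
            decomp[where A=A and s=s and n=n and k=k and d=d and x=x and x'=x', OF spos]
            D_norm[where s=s and n=n and k=k and d=d and x=x and x'=x', OF spos] by blast
        define g' where "g' = restrict g {..<m}"
        have g'P: "g' \<in> PiE {..<m} (\<lambda>_. Ks d k)" unfolding g'_def using g(1) by auto
        have Bgeq: "Bg n x x' s m g' = Bg n x x' s m g"
          unfolding Bg_def g'_def by (intro ext) (simp add: restrict_def)
        have pw: "(Phi d x x' A t - (\<Sum>r<m. Phi d x x' (Dm n x x' s (g r)) t) / real m)\<^sup>2
              = (real m * Phi d x x' A t - (\<Sum>r<m. Phi d x x' (Dm n x x' s (g r)) t))\<^sup>2 / (real m)\<^sup>2" for t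
        proof -
          have "Phi d x x' A t - (\<Sum>r<m. Phi d x x' (Dm n x x' s (g r)) t) / real m
              = (real m * Phi d x x' A t - (\<Sum>r<m. Phi d x x' (Dm n x x' s (g r)) t)) / real m"
            using mpos by (simp add: diff_divide_distrib)
          then show ?thesis by (simp add: power_divide)
        qed
        have "dist2 n d k x x' A (Bg n x x' s m g)
            = (\<Sum>t\<in>Is n k. (real m * Phi d x x' A t - (\<Sum>r<m. Phi d x x' (Dm n x x' s (g r)) t))\<^sup>2) / (real m)\<^sup>2"
        proof -
          have "dist2 n d k x x' A (Bg n x x' s m g)
            = (\<Sum>t\<in>Is n k. (real m * Phi d x x' A t - (\<Sum>r<m. Phi d x x' (Dm n x x' s (g r)) t))\<^sup>2 / (real m)\<^sup>2)"
            unfolding dist2_Phi Phi_Bg by (rule sum.cong[OF refl], rule pw)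
          then show ?thesis by (simp only: sum_divide_distrib[symmetric])
        qed
        also have "\<dots> \<le> real m * s\<^sup>2 / (real m)\<^sup>2" by (rule divide_right_mono[OF g(2)]) simp
        also have "\<dots> = s\<^sup>2 / real m" using mpos by (simp add: power2_eq_square)
        finally have "dist2 n d k x x' A (Bg n x x' s m g) \<le> s\<^sup>2 / real m" .
        from approx[OF AJ this mpos m1]
        show "\<exists>c\<in>C. vnorm n (\<lambda>i. u i - c i) \<le> \<epsilon> / 2"
          unfolding u C_def using g'P Bgeq by (intro bexI[OF _ imageI[OF g'P]]) simp
      qed
    qed
    then have cov: "covering_number n S \<epsilon> \<le> (2 * d * k + 1) ^ m" using cardC by linarith
    have "ln (real (covering_number n S \<epsilon>)) \<le> ln (real ((2 * d * k + 1) ^ m))"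
    proof (cases "covering_number n S \<epsilon> = 0")
      case True then show ?thesis by simp
    next
      case False
      define N where "N = (2 * d * k + 1) ^ m"
      have c1: "real (covering_number n S \<epsilon>) \<le> real N" using cov unfolding N_def by linarith
      have c0: "0 < real (covering_number n S \<epsilon>)" using False by simp
      have "ln (real (covering_number n S \<epsilon>)) \<le> ln (real N)"
        using c0 c1 by (subst ln_le_cancel_iff) auto
      then show ?thesis unfolding N_def .
    qed
    also have "\<dots> = real m * ln (2 * real d * real k + 1)" by (simp add: ln_realpow add.commute)
    also have "ln (2 * real d * real k + 1) \<le> 2 * ln (2 * real d * real k)"
    proof -
      have "2 * real d * real k + 1 \<le> (2 * real d * real k)\<^sup>2"
      proof -
        have "2 * (2 * real d * real k) \<le> (2 * real d * real k) * (2 * real d * real k)"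
          using dk by (intro mult_right_mono) auto
        then show ?thesis using dk by (simp add: power2_eq_square)
      qed
      then have "ln (2 * real d * real k + 1) \<le> ln ((2 * real d * real k)\<^sup>2)"
        using dk d k by (subst ln_le_cancel_iff) auto
      also have "\<dots> = 2 * ln (2 * real d * real k)" using dk by (simp add: ln_realpow)
      finally show ?thesis .
    qed
    then have "real m * ln (2 * real d * real k + 1) \<le> real m * (2 * ln (2 * real d * real k))"
      using mpos by (simp add: mult_left_mono)
    also have "\<dots> \<le> (1152 * Q) * (2 * ln (2 * real d * real k))"
      using m2 False ln0 by (intro mult_right_mono) auto
    also have "\<dots> = 2304 * Q * ln (2 * real d * real k)" by simp
    finally show ?thesis unfolding RHS S_def .
  qed
qed


theorem mainTheorem2:
  shows "\<exists>c>0. \<forall>(n::nat) (d::nat) (k::nat) (\<phi>::real \<Rightarrow> real) (L::real) (b::real)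
            (x::nat \<Rightarrow> nat \<Rightarrow> real) (x'::nat \<Rightarrow> nat \<Rightarrow> real) (a::real) (a'::real) (\<epsilon>::real).
     n \<ge> 1 \<longrightarrow> d \<ge> 1 \<longrightarrow> k \<ge> 1 \<longrightarrow>
     L-lipschitz_on UNIV \<phi> \<longrightarrow> \<phi> 0 = 0 \<longrightarrow> b > 0 \<longrightarrow>
     (\<forall>i<n. vnorm d (x i) \<le> b \<and> vnorm d (x' i) \<le> b) \<longrightarrow>
     a > 0 \<longrightarrow> a' > 0 \<longrightarrow> \<epsilon> > 0 \<longrightarrow>
     ln (real (covering_number n (F_set n d k \<phi> x x' (J_set d k a a')) \<epsilon>))
       \<le> c * (a\<^sup>2 * a'\<^sup>2 * b ^ 4 * real n * L ^ 4) / ((real k)\<^sup>2 * \<epsilon>\<^sup>2) * ln (2 * real d * real k)"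
proof (intro exI[of _ "2304::real"] conjI allI impI)
  show "(0::real) < 2304" by simp
next
  fix n d k :: nat and \<phi> :: "real \<Rightarrow> real" and L b :: real and x x' :: "nat \<Rightarrow> nat \<Rightarrow> real" and a a' \<epsilon> :: real
  assume "n \<ge> 1" "d \<ge> 1" "k \<ge> 1" "L-lipschitz_on UNIV \<phi>" "\<phi> 0 = 0" "b > 0"
    "\<forall>i<n. vnorm d (x i) \<le> b \<and> vnorm d (x' i) \<le> b" "a > 0" "a' > 0" "\<epsilon> > 0"
  then show "ln (real (covering_number n (F_set n d k \<phi> x x' (J_set d k a a')) \<epsilon>))
       \<le> 2304 * (a\<^sup>2 * a'\<^sup>2 * b ^ 4 * real n * L ^ 4) / ((real k)\<^sup>2 * \<epsilon>\<^sup>2) * ln (2 * real d * real k)"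
    by (intro main_inner) auto
qed

end
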